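(* Let $W^\pm=(\alpha_1^\pm,\rho_1^\pm,\rho_2^\pm,u_1^\pm,u_2^\pm)$ with $\alpha_1^\pm\in(0,1)$, $\rho_i^\pm>0$, and $S\in\mathbb{R}$ satisfy the Rankine–Hugoniot conditions \begin{align*} &[\![\alpha_1\rho u]\!]=S[\![\alpha_1\rho]\!],\quad [\![\alpha_1\rho_1u_1]\!]=S[\![\alpha_1\rho_1]\!],\quad [\![\rho u]\!]=S[\![\rho]\!],\\ &[\![\alpha_1\rho_1u_1^2+\alpha_2\rho_2u_2^2+\alpha_1p_1+\alpha_2p_2]\!]=S[\![\alpha_1\rho_1u_1+\alpha_2\rho_2u_2]\!],\quad [\![\tfrac12(u_1^2-u_2^2)+\Psi_1-\Psi_2]\!]=S[\![u_1-u_2]\!]. \end{align*} Define the energy dissipation across the discontinuity \[ D=\sum_{i=1}^2\Big(-S\,[\![\alpha_i\rho_i(\varphi_i+\tfrac12u_i^2)]\!]+[\![\alpha_i\rho_iu_i(\Psi_i+\tfrac12u_i^2)]\!]\Big). \] Then the quantities $\alpha_iQ_i$ ($i=1,2$) and $Q$ take the same value on both sides, $[\![\Psi_1+\tfrac12(u_1-S)^2]\!]=[\![\Psi_2+\tfrac12(u_2-S)^2]\!]$, and \[ D=-\sum_{i=1}^2\alpha_iQ_i\,[\![\Psi_i+\tfrac12(u_i-S)^2]\!]=-Q\,[\![\Psi_1+\tfrac12(u_1-S)^2]\!]=-Q\,[\![\Psi_2+\tfrac12(u_2-S)^2]\!]. \] In particular the entropy (energy) admissibility condition $D\le0$ is equivalent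 to $Q\,[\![\Psi_1+\tfrac12(u_1-S)^2]\!]\ge0$.
   Context: For $i=1,2$, $p_i:(0,\infty)\to\mathbb{R}$ is smooth with $p_i'>0$; $\varphi_i$ is an antiderivative of $\rho\mapsto p_i(\rho)/\rho^2$ (the specific internal energy in the isentropic case, the specific free energy $e_i-Ts_i$ in the isothermal case) and $\Psi_i(\rho)=\varphi_i(\rho)+p_i(\rho)/\rho$ (enthalpy, resp. Gibbs energy). For a state: $\alpha_2=1-\alpha_1$, $\rho=\alpha_1\rho_1+\alpha_2\rho_2$, $c_i=\alpha_i\rho_i/\rho$, $u=c_1u_1+c_2u_2$, $p_i=p_i(\rho_i)$, $\varphi_i=\varphi_i(\rho_i)$, $\Psi_i=\Psi_i(\rho_i)$. Mass fluxes: $Q=-\rho(u-S)$, $Q_i=-\rho_i(u_i-S)$. $[\![f]\!]=f(W^+)-f(W^-)$. The admissibility (mathematical entropy) condition for the system is that the total energy $\sum_i\alpha_i\rho_i(\varphi_i+u_i^2/2)$ with flux $\sum_i\alpha_i\rho_iu_i(\Psi_i+u_i^2/2)$ is dissipated, i.e. $D\le 0$ across discontinuities. *)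

theory Defs
  imports "HOL-Analysis.Analysis"
begin

type_synonym state = "real \<times> real \<times> real \<times> real \<times> real"

definition al1 :: "state \<Rightarrow> real" where "al1 W = (case W of (a,r1,r2,v1,v2) \<Rightarrow> a)"
definition al2 :: "state \<Rightarrow> real" where "al2 W = 1 - al1 W"
definition rh1 :: "state \<Rightarrow> real" where "rh1 W = (case W of (a,r1,r2,v1,v2) \<Rightarrow> r1)"
definition rh2 :: "state \<Rightarrow> real" where "rh2 W = (case W of (a,r1,r2,v1,v2) \<Rightarrow> r2)"
definition vel1 :: "state \<Rightarrow> real" where "vel1 W = (case W of (a,r1,r2,v1,v2) \<Rightarrow> v1)"
definition vel2 :: "state \<Rightarrow> real" where "vel2 W = (case W of (a,r1,r2,v1,v2) \<Rightarrow> v2)"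

definition rho_mix :: "state \<Rightarrow> real" where
  "rho_mix W = al1 W * rh1 W + al2 W * rh2 W"
definition c1 :: "state \<Rightarrow> real" where "c1 W = al1 W * rh1 W / rho_mix W"
definition c2 :: "state \<Rightarrow> real" where "c2 W = al2 W * rh2 W / rho_mix W"
definition u_mix :: "state \<Rightarrow> real" where "u_mix W = c1 W * vel1 W + c2 W * vel2 W"

definition jump :: "(state \<Rightarrow> real) \<Rightarrow> state \<Rightarrow> state \<Rightarrow> real" where
  "jump f Wm Wp = f Wp - f Wm"

definition Psi :: "(real \<Rightarrow> real) \<Rightarrow> (real \<Rightarrow> real) \<Rightarrow> real \<Rightarrow> real" where
  "Psi p \<phi> r = \<phi> r + p r / r"

definition Qm :: "real \<Rightarrow> state \<Rightarrow> real" where "Qm S W = - rho_mix W * (u_mix W - S)"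
definition Q1 :: "real \<Rightarrow> state \<Rightarrow> real" where "Q1 S W = - rh1 W * (vel1 W - S)"
definition Q2 :: "real \<Rightarrow> state \<Rightarrow> real" where "Q2 S W = - rh2 W * (vel2 W - S)"

definition pressure_law :: "(real \<Rightarrow> real) \<Rightarrow> bool" where
  "pressure_law p \<longleftrightarrow> (\<forall>k. ((deriv ^^ k) p) differentiable_on {0<..})
      \<and> (\<forall>r>0. deriv p r > 0)"

definition free_energy :: "(real \<Rightarrow> real) \<Rightarrow> (real \<Rightarrow> real) \<Rightarrow> bool" where
  "free_energy p \<phi> \<longleftrightarrow> (\<forall>r>0. (\<phi> has_real_derivative p r / r\<^sup>2) (at r))"

definition admissible_state :: "state \<Rightarrow> bool" where
  "admissible_state W \<longleftrightarrow> 0 < al1 W \<and> al1 W < 1 \<and> 0 < rh1 W \<and> 0 < rh2 W"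

definition RH :: "(real \<Rightarrow> real) \<Rightarrow> (real \<Rightarrow> real) \<Rightarrow> (real \<Rightarrow> real) \<Rightarrow> (real \<Rightarrow> real)
    \<Rightarrow> real \<Rightarrow> state \<Rightarrow> state \<Rightarrow> bool" where
  "RH p1 p2 \<phi>1 \<phi>2 S Wm Wp \<longleftrightarrow>
     jump (\<lambda>W. al1 W * rho_mix W * u_mix W) Wm Wp = S * jump (\<lambda>W. al1 W * rho_mix W) Wm Wp
   \<and> jump (\<lambda>W. al1 W * rh1 W * vel1 W) Wm Wp = S * jump (\<lambda>W. al1 W * rh1 W) Wm Wp
   \<and> jump (\<lambda>W. rho_mix W * u_mix W) Wm Wp = S * jump rho_mix Wm Wp
   \<and> jump (\<lambda>W. al1 W * rh1 W * (vel1 W)\<^sup>2 + al2 W * rh2 W * (vel2 W)\<^sup>2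
               + al1 W * p1 (rh1 W) + al2 W * p2 (rh2 W)) Wm Wp
       = S * jump (\<lambda>W. al1 W * rh1 W * vel1 W + al2 W * rh2 W * vel2 W) Wm Wp
   \<and> jump (\<lambda>W. ((vel1 W)\<^sup>2 - (vel2 W)\<^sup>2) / 2 + Psi p1 \<phi>1 (rh1 W) - Psi p2 \<phi>2 (rh2 W)) Wm Wp
       = S * jump (\<lambda>W. vel1 W - vel2 W) Wm Wp"

definition Diss :: "(real \<Rightarrow> real) \<Rightarrow> (real \<Rightarrow> real) \<Rightarrow> (real \<Rightarrow> real) \<Rightarrow> (real \<Rightarrow> real)
    \<Rightarrow> real \<Rightarrow> state \<Rightarrow> state \<Rightarrow> real" where
  "Diss p1 p2 \<phi>1 \<phi>2 S Wm Wp =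
     (- S * jump (\<lambda>W. al1 W * rh1 W * (\<phi>1 (rh1 W) + (vel1 W)\<^sup>2 / 2)) Wm Wp
      + jump (\<lambda>W. al1 W * rh1 W * vel1 W * (Psi p1 \<phi>1 (rh1 W) + (vel1 W)\<^sup>2 / 2)) Wm Wp)
   + (- S * jump (\<lambda>W. al2 W * rh2 W * (\<phi>2 (rh2 W) + (vel2 W)\<^sup>2 / 2)) Wm Wp
      + jump (\<lambda>W. al2 W * rh2 W * vel2 W * (Psi p2 \<phi>2 (rh2 W) + (vel2 W)\<^sup>2 / 2)) Wm Wp)"

end

theory Submission
  imports Defs
begin

lemma core:
  fixes a b r1 r2 v1 v2 q1 q2 F1 F2 ap bp r1p r2p v1p v2p q1p q2p F1p F2p S :: real
  assumes h2: "ap*r1p* v1p - a*r1* v1 = S*(ap*r1p - a*r1)"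
  and h3: "(ap*r1p* v1p + bp*r2p* v2p) - (a*r1* v1 + b*r2* v2) = S*((ap*r1p + bp*r2p) - (a*r1 + b*r2))"
  and h4: "(ap*r1p* v1p^2 + bp*r2p* v2p^2 + ap*(r1p*q1p) + bp*(r2p*q2p)) - (a*r1* v1^2 + b*r2* v2^2 + a*(r1*q1) + b*(r2*q2))
          = S*((ap*r1p* v1p + bp*r2p* v2p) - (a*r1* v1 + b*r2* v2))"
  shows "(- S * (ap*r1p*(F1p + v1p^2/2) - a*r1*(F1 + v1^2/2))
        + (ap*r1p* v1p*((F1p + q1p) + v1p^2/2) - a*r1* v1*((F1 + q1) + v1^2/2)))
      + (- S * (bp*r2p*(F2p + v2p^2/2) - b*r2*(F2 + v2^2/2))
        + (bp*r2p* v2p*((F2p + q2p) + v2p^2/2) - b*r2* v2*((F2 + q2) + v2^2/2)))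
    = - (a*(- r1*(v1-S)) * (((F1p + q1p) + (v1p-S)^2/2) - ((F1 + q1) + (v1-S)^2/2))
       + b*(- r2*(v2-S)) * (((F2p + q2p) + (v2p-S)^2/2) - ((F2 + q2) + (v2-S)^2/2)))"
proof -
  have "2*((- S * (ap*r1p*F1p - a*r1*F1) + (ap*r1p* v1p*(F1p + q1p) - a*r1* v1*(F1 + q1)))
      + (- S * (bp*r2p*F2p - b*r2*F2) + (bp*r2p* v2p*(F2p + q2p) - b*r2* v2*(F2 + q2)))) 
      + (- S * (ap*r1p* v1p^2 - a*r1* v1^2) + (ap*r1p* v1p* v1p^2 - a*r1* v1* v1^2))
      + (- S * (bp*r2p* v2p^2 - b*r2* v2^2) + (bp*r2p* v2p* v2p^2 - b*r2* v2* v2^2))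
    = - (a*(- r1*(v1-S)) * (2*(F1p + q1p) + (v1p-S)^2 - (2*(F1 + q1) + (v1-S)^2))
       + b*(- r2*(v2-S)) * (2*(F2p + q2p) + (v2p-S)^2 - (2*(F2 + q2) + (v2-S)^2)))"
    using assms by algebra
  then show ?thesis by (simp add: field_simps)
qed

lemma rho_pos: "admissible_state W \<Longrightarrow> rho_mix W > 0"
  unfolding admissible_state_def rho_mix_def al2_def
  by (simp add: add_pos_pos)

lemma ru: "admissible_state W \<Longrightarrow> rho_mix W * u_mix W = al1 W * rh1 W * vel1 W + al2 W * rh2 W * vel2 W"
  using rho_pos[of W] unfolding u_mix_def c1_def c2_def by (simp add: field_simps)

theorem mainTheorem3:
  fixes p1 p2 \<phi>1 \<phi>2 :: "real \<Rightarrow> real" and S :: real and Wm Wp :: state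
  assumes "pressure_law p1" and "pressure_law p2"
    and "free_energy p1 \<phi>1" and "free_energy p2 \<phi>2"
    and "admissible_state Wm" and "admissible_state Wp"
    and "RH p1 p2 \<phi>1 \<phi>2 S Wm Wp"
  shows "al1 Wm * Q1 S Wm = al1 Wp * Q1 S Wp
    \<and> al2 Wm * Q2 S Wm = al2 Wp * Q2 S Wp
    \<and> Qm S Wm = Qm S Wp
    \<and> jump (\<lambda>W. Psi p1 \<phi>1 (rh1 W) + (vel1 W - S)\<^sup>2 / 2) Wm Wp
        = jump (\<lambda>W. Psi p2 \<phi>2 (rh2 W) + (vel2 W - S)\<^sup>2 / 2) Wm Wp
    \<and> Diss p1 p2 \<phi>1 \<phi>2 S Wm Wp
        = - (al1 Wm * Q1 S Wm * jump (\<lambda>W. Psi p1 \<phi>1 (rh1 W) + (vel1 W - S)\<^sup>2 / 2) Wm Wp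
             + al2 Wm * Q2 S Wm * jump (\<lambda>W. Psi p2 \<phi>2 (rh2 W) + (vel2 W - S)\<^sup>2 / 2) Wm Wp)
    \<and> Diss p1 p2 \<phi>1 \<phi>2 S Wm Wp
        = - Qm S Wm * jump (\<lambda>W. Psi p1 \<phi>1 (rh1 W) + (vel1 W - S)\<^sup>2 / 2) Wm Wp
    \<and> Diss p1 p2 \<phi>1 \<phi>2 S Wm Wp
        = - Qm S Wm * jump (\<lambda>W. Psi p2 \<phi>2 (rh2 W) + (vel2 W - S)\<^sup>2 / 2) Wm Wp
    \<and> (Diss p1 p2 \<phi>1 \<phi>2 S Wm Wp \<le> 0
        \<longleftrightarrow> Qm S Wm * jump (\<lambda>W. Psi p1 \<phi>1 (rh1 W) + (vel1 W - S)\<^sup>2 / 2) Wm Wp \<ge> 0)"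
proof -
  note adm = assms(5,6)
  have ruM: "rho_mix Wm * u_mix Wm = al1 Wm * rh1 Wm * vel1 Wm + al2 Wm * rh2 Wm * vel2 Wm"
    using ru adm by blast
  have ruP: "rho_mix Wp * u_mix Wp = al1 Wp * rh1 Wp * vel1 Wp + al2 Wp * rh2 Wp * vel2 Wp"
    using ru adm by blast
  have QmM: "Qm S Wm = - (al1 Wm * rh1 Wm * vel1 Wm + al2 Wm * rh2 Wm * vel2 Wm) + S * rho_mix Wm"
    unfolding Qm_def using ruM by (simp add: algebra_simps)
  have QmP: "Qm S Wp = - (al1 Wp * rh1 Wp * vel1 Wp + al2 Wp * rh2 Wp * vel2 Wp) + S * rho_mix Wp"
    unfolding Qm_def using ruP by (simp add: algebra_simps)
  obtain h2 h3 h4 h5 where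
    h2: "jump (\<lambda>W. al1 W * rh1 W * vel1 W) Wm Wp = S * jump (\<lambda>W. al1 W * rh1 W) Wm Wp"
    and h3: "jump (\<lambda>W. rho_mix W * u_mix W) Wm Wp = S * jump rho_mix Wm Wp"
    and h4: "jump (\<lambda>W. al1 W * rh1 W * (vel1 W)\<^sup>2 + al2 W * rh2 W * (vel2 W)\<^sup>2
               + al1 W * p1 (rh1 W) + al2 W * p2 (rh2 W)) Wm Wp
       = S * jump (\<lambda>W. al1 W * rh1 W * vel1 W + al2 W * rh2 W * vel2 W) Wm Wp"
    and h5: "jump (\<lambda>W. ((vel1 W)\<^sup>2 - (vel2 W)\<^sup>2) / 2 + Psi p1 \<phi>1 (rh1 W) - Psi p2 \<phi>2 (rh2 W)) Wm Wp
       = S * jump (\<lambda>W. vel1 W - vel2 W) Wm Wp"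
    using assms(7) unfolding RH_def by blast
  define a where "a = al1 Wm"
  define b where "b = al2 Wm"
  define r1 where "r1 = rh1 Wm"
  define r2 where "r2 = rh2 Wm"
  define v1 where "v1 = vel1 Wm"
  define v2 where "v2 = vel2 Wm"
  define ap where "ap = al1 Wp"
  define bp where "bp = al2 Wp"
  define r1p where "r1p = rh1 Wp"
  define r2p where "r2p = rh2 Wp"
  define v1p where "v1p = vel1 Wp"
  define v2p where "v2p = vel2 Wp"
  define q1 where "q1 = p1 r1 / r1"
  define q2 where "q2 = p2 r2 / r2"
  define q1p where "q1p = p1 r1p / r1p"
  define q2p where "q2p = p2 r2p / r2p"
  define F1 where "F1 = \<phi>1 r1"
  define F2 where "F2 = \<phi>2 r2"
  define F1p where "F1p = \<phi>1 r1p"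
  define F2p where "F2p = \<phi>2 r2p"
  have pos: "r1 > 0" "r2 > 0" "r1p > 0" "r2p > 0"
    using adm unfolding admissible_state_def r1_def r2_def r1p_def r2p_def by auto
  have pq: "p1 r1 = r1*q1" "p2 r2 = r2*q2" "p1 r1p = r1p*q1p" "p2 r2p = r2p*q2p"
    using pos unfolding q1_def q2_def q1p_def q2p_def by auto
  have rm: "rho_mix Wm = a*r1 + b*r2" "rho_mix Wp = ap*r1p + bp*r2p"
    unfolding rho_mix_def a_def b_def r1_def r2_def ap_def bp_def r1p_def r2p_def by auto
  have bb: "b = 1 - a" "bp = 1 - ap" unfolding a_def b_def ap_def bp_def al2_def by auto
  have H2: "ap*r1p* v1p - a*r1* v1 = S*(ap*r1p - a*r1)"
    using h2 unfolding jump_def a_def r1_def v1_def ap_def r1p_def v1p_def by simp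
  have H3: "(ap*r1p* v1p + bp*r2p* v2p) - (a*r1* v1 + b*r2* v2) = S*((ap*r1p + bp*r2p) - (a*r1 + b*r2))"
    using h3 ruM ruP rm unfolding jump_def a_def r1_def v1_def ap_def r1p_def v1p_def
      b_def r2_def v2_def bp_def r2p_def v2p_def by simp
  have H4: "(ap*r1p* v1p^2 + bp*r2p* v2p^2 + ap*(r1p*q1p) + bp*(r2p*q2p)) - (a*r1* v1^2 + b*r2* v2^2 + a*(r1*q1) + b*(r2*q2))
          = S*((ap*r1p* v1p + bp*r2p* v2p) - (a*r1* v1 + b*r2* v2))"
    using h4 pq unfolding jump_def a_def r1_def v1_def ap_def r1p_def v1p_def
      b_def r2_def v2_def bp_def r2p_def v2p_def by simp
  have H5: "((v1p^2 - v2p^2)/2 + (F1p + q1p) - (F2p + q2p)) - ((v1^2 - v2^2)/2 + (F1 + q1) - (F2 + q2))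
          = S*((v1p - v2p) - (v1 - v2))"
    using h5 unfolding jump_def Psi_def a_def r1_def v1_def ap_def r1p_def v1p_def
      b_def r2_def v2_def bp_def r2p_def v2p_def F1_def F2_def F1p_def F2p_def q1_def q2_def q1p_def q2p_def by simp
  have J1: "jump (\<lambda>W. Psi p1 \<phi>1 (rh1 W) + (vel1 W - S)\<^sup>2 / 2) Wm Wp
     = ((F1p + q1p) + (v1p-S)^2/2) - ((F1 + q1) + (v1-S)^2/2)"
    unfolding jump_def Psi_def r1_def v1_def r1p_def v1p_def F1_def F1p_def q1_def q1p_def by simp
  have J2: "jump (\<lambda>W. Psi p2 \<phi>2 (rh2 W) + (vel2 W - S)\<^sup>2 / 2) Wm Wp
     = ((F2p + q2p) + (v2p-S)^2/2) - ((F2 + q2) + (v2-S)^2/2)"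
    unfolding jump_def Psi_def r2_def v2_def r2p_def v2p_def F2_def F2p_def q2_def q2p_def by simp
  have DD: "Diss p1 p2 \<phi>1 \<phi>2 S Wm Wp = (- S * (ap*r1p*(F1p + v1p^2/2) - a*r1*(F1 + v1^2/2))
        + (ap*r1p* v1p*((F1p + q1p) + v1p^2/2) - a*r1* v1*((F1 + q1) + v1^2/2)))
      + (- S * (bp*r2p*(F2p + v2p^2/2) - b*r2*(F2 + v2^2/2))
        + (bp*r2p* v2p*((F2p + q2p) + v2p^2/2) - b*r2* v2*((F2 + q2) + v2^2/2)))"
    unfolding Diss_def jump_def Psi_def a_def r1_def v1_def ap_def r1p_def v1p_def
      b_def r2_def v2_def bp_def r2p_def v2p_def F1_def F2_def F1p_def F2p_def q1_def q2_def q1p_def q2p_def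
    by simp
  have Q1s: "al1 Wm * Q1 S Wm = a*(- r1*(v1-S))" "al1 Wp * Q1 S Wp = ap*(- r1p*(v1p-S))"
    unfolding Q1_def a_def r1_def v1_def ap_def r1p_def v1p_def by auto
  have Q2s: "al2 Wm * Q2 S Wm = b*(- r2*(v2-S))" "al2 Wp * Q2 S Wp = bp*(- r2p*(v2p-S))"
    unfolding Q2_def b_def r2_def v2_def bp_def r2p_def v2p_def by auto
  have Qms: "Qm S Wm = - (a*r1* v1 + b*r2* v2) + S*(a*r1 + b*r2)" "Qm S Wp = - (ap*r1p* v1p + bp*r2p* v2p) + S*(ap*r1p + bp*r2p)"
    using QmM QmP rm unfolding a_def r1_def v1_def ap_def r1p_def v1p_def
      b_def r2_def v2_def bp_def r2p_def v2p_def by auto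
  have c1: "a*(- r1*(v1-S)) = ap*(- r1p*(v1p-S))" using H2 by (simp add: algebra_simps)
  have c2: "b*(- r2*(v2-S)) = bp*(- r2p*(v2p-S))" using H2 H3 by (simp add: algebra_simps)
  have c3: "Qm S Wm = Qm S Wp" using Qms H3 by (simp add: algebra_simps)
  have c4: "((F1p + q1p) + (v1p-S)^2/2) - ((F1 + q1) + (v1-S)^2/2)
     = ((F2p + q2p) + (v2p-S)^2/2) - ((F2 + q2) + (v2-S)^2/2)"
    using H5 by (simp add: power2_eq_square field_simps)
  have c5: "Diss p1 p2 \<phi>1 \<phi>2 S Wm Wp = - (a*(- r1*(v1-S)) * (((F1p + q1p) + (v1p-S)^2/2) - ((F1 + q1) + (v1-S)^2/2))
       + b*(- r2*(v2-S)) * (((F2p + q2p) + (v2p-S)^2/2) - ((F2 + q2) + (v2-S)^2/2)))"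
    unfolding DD by (rule core[OF H2 H3 H4])
  have qsum: "a*(- r1*(v1-S)) + b*(- r2*(v2-S)) = Qm S Wm" using Qms by (simp add: algebra_simps)
  have c6: "Diss p1 p2 \<phi>1 \<phi>2 S Wm Wp = - Qm S Wm * jump (\<lambda>W. Psi p1 \<phi>1 (rh1 W) + (vel1 W - S)\<^sup>2 / 2) Wm Wp"
    proof -
    have g: "\<And>x y J::real. -(x*J + y*J) = -(x+y)*J" by (simp add: algebra_simps)
    show ?thesis unfolding c5 J1 qsum[symmetric] c4 by (rule g)
  qed
  have c7: "Diss p1 p2 \<phi>1 \<phi>2 S Wm Wp = - Qm S Wm * jump (\<lambda>W. Psi p2 \<phi>2 (rh2 W) + (vel2 W - S)\<^sup>2 / 2) Wm Wp"
    unfolding c6 J1 J2 c4 ..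
  show ?thesis
    using c1 c2 c3 c4 c5 c6 c7 Q1s Q2s J1 J2 by auto
qed

end
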